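(* Let $V$ be a subset of $\mathbb{R}^n$ and $W$ a nonempty subset of $\mathbb{R}^m$. Let $f_1,\ldots,f_n\in\overline{\boldsymbol{T}(Y_1,\ldots,Y_m)}/\boldsymbol{E}(W)$ and suppose that the image of $\theta:W\to\boldsymbol{T}^n$, $y\mapsto(f_1(y),\ldots,f_n(y))$, is contained in $V$. Let $\theta^\ast:\overline{\boldsymbol{T}(X_1,\ldots,X_n)}/\boldsymbol{E}(V)\to F(W,\boldsymbol{T})$, $f\mapsto f\circ\theta$. Then: (1) $V\neq\varnothing$; (2) $\operatorname{Im}(\theta^\ast)\subset\overline{\boldsymbol{T}(Y_1,\ldots,Y_m)}/\boldsymbol{E}(W)\subset F(W,\boldsymbol{T})$; (3) $\theta^\ast$ is a $\boldsymbol{T}$-algebra homomorphism; (4) if $\operatorname{Im}(\theta)\supset V$, then $\theta^\ast$ is injective; (5) if $V$ and $W$ are homeomorphic via $\theta$ and there exist $g_1,\ldots,g_m\in\overline{\boldsymbol{T}(X_1,\ldots,X_n)}/\boldsymbol{E}(V)$ such that $\theta^{-1}(x)=(g_1(x),\ldots,g_m(x))$ for all $x\in V$, then $\overline{\boldsymbol{T}(X_1,\ldots,X_n)}/\boldsymbol{E}(V)$ and $\overline{\boldsymbol{T}(Y_1,\ldots,Y_m)}/\boldsymbol{E}(W)$ are isomorphic via $\theta^\ast$.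
   Context: $\boldsymbol{T}=\mathbb{R}\cup\{-\infty\}$ with $a\oplus b=\max\{a,b\}$, $a\odot b=a+b$. Semirings are commutative with $0,1$; $\boldsymbol{T}$-algebras are semirings with a semiring homomorphism from $\boldsymbol{T}$, and $\boldsymbol{T}$-algebra homomorphisms are compatible semiring homomorphisms (isomorphism = bijective one). $\overline{\boldsymbol{T}[X_1,\ldots,X_n]}$ is the tropical polynomial semiring modulo identifying polynomials defining the same function $\boldsymbol{T}^n\to\boldsymbol{T}$; it is cancellative and $\overline{\boldsymbol{T}(X_1,\ldots,X_n)}$ is its semifield of fractions. Each element defines a function $\mathbb{R}^n\to\boldsymbol{T}$ (quotients evaluated as differences). For $V\subset\mathbb{R}^n$, $\boldsymbol{E}(V)=\{(f,g)\mid f(x)=g(x)\ \forall x\in V\}$ is a congruence (an equivalence relation compatible with both operations) on $\overline{\boldsymbol{T}(X_1,\ldots,X_n)}$, and an element of the quotient $\overline{\boldsymbol{T}(X_1,\ldots,X_n)}/\boldsymbol{E}(V)$ is evaluated at $x\in V$ via any representative (well defined), so it defines a function $V\to\boldsymbol{T}$. $F(W,\boldsymbol{T})$ is the $\boldsymbol{T}$-algebra of all functions $W\to\boldsymbol{T}$ with pointwise operations, and $\overline{\boldsymbol{T}(Y_1,\ldots,Y_m)}/\boldsymbol{E}(W)$ is regarded as a subset of it via evaluation. *)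

theory Defs
  imports "HOL-Analysis.Analysis" "HOL-Library.Extended_Real"
begin

text \<open>The tropical semifield T = R \<union> {-\<infinity>} is modelled inside ereal
  (the value \<infinity> never occurs); tropical addition is max, tropical
  multiplication is +.\<close>

text \<open>Function R^n \<rightarrow> T of the tropical polynomial with finitely many terms
  a \<odot> X^k (a real, k a multi-exponent); empty term set gives -\<infinity>
  (terms with coefficient -\<infinity> are simply omitted).\<close>
definition trop_poly_fun :: "(real \<times> (nat^'n::finite)) set \<Rightarrow> real^'n \<Rightarrow> ereal" where
  "trop_poly_fun P x = (if P = {} then -\<infinity>
     else Max ((\<lambda>(a,k). ereal (a + (\<Sum>i\<in>UNIV. real (k$i) * x$i))) ` P))"

text \<open>Elements of the polynomial semiring modulo functional equality.\<close>
definition trop_poly :: "(real^'n::finite \<Rightarrow> ereal) set" where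
  "trop_poly = {trop_poly_fun P | P. finite P}"

text \<open>Elements of the semifield of fractions, as functions R^n \<rightarrow> T
  (quotients evaluated as differences; denominator nonzero).\<close>
definition trop_rat :: "(real^'n::finite \<Rightarrow> ereal) set" where
  "trop_rat = {(\<lambda>x. f x - g x) | f g. f \<in> trop_poly \<and> g \<in> trop_poly \<and> g \<noteq> (\<lambda>_. -\<infinity>)}"

definition restr :: "'a set \<Rightarrow> ('a \<Rightarrow> ereal) \<Rightarrow> 'a \<Rightarrow> ereal" where
  "restr S h = (\<lambda>x. if x \<in> S then h x else -\<infinity>)"

text \<open>The quotient T(X)/E(V), identified with the set of functions V \<rightarrow> T
  it induces (each class is determined by its values on V).\<close>
definition rat_quot :: "(real^'n::finite) set \<Rightarrow> (real^'n \<Rightarrow> ereal) set" where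
  "rat_quot V = restr V ` trop_rat"

definition FWT :: "'a set \<Rightarrow> ('a \<Rightarrow> ereal) set" where
  "FWT W = {h. (\<forall>y\<in>W. h y \<noteq> \<infinity>) \<and> (\<forall>y. y \<notin> W \<longrightarrow> h y = -\<infinity>)}"

text \<open>T-algebra homomorphism from T(X)/E(V) to F(W,T): preserves tropical
  addition and multiplication and is compatible with the structure maps
  c \<mapsto> constant c (hence also preserves 0 = -\<infinity> and 1 = 0).\<close>
definition trop_alg_hom :: "'a set \<Rightarrow> ('a \<Rightarrow> ereal) set \<Rightarrow> 'b set
    \<Rightarrow> (('a \<Rightarrow> ereal) \<Rightarrow> ('b \<Rightarrow> ereal)) \<Rightarrow> bool" where
  "trop_alg_hom V A W \<phi> \<longleftrightarrow>
     (\<forall>a\<in>A. \<forall>b\<in>A. \<phi> (\<lambda>x. max (a x) (b x)) = (\<lambda>y. max (\<phi> a y) (\<phi> b y))) \<and>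
     (\<forall>a\<in>A. \<forall>b\<in>A. \<phi> (\<lambda>x. a x + b x) = (\<lambda>y. \<phi> a y + \<phi> b y)) \<and>
     (\<forall>c. c \<noteq> \<infinity> \<longrightarrow> \<phi> (restr V (\<lambda>_. c)) = restr W (\<lambda>_. c))"

end

theory Submission
  imports Defs
begin

abbreviation tterm :: "real \<times> (nat^'n::finite) \<Rightarrow> real^'n \<Rightarrow> ereal" where
  "tterm t x \<equiv> (case t of (a,k) \<Rightarrow> ereal (a + (\<Sum>i\<in>UNIV. real (k$i) * x$i)))"

lemma tpf_empty[simp]: "trop_poly_fun {} = (\<lambda>_. -\<infinity>)"
  by (auto simp: trop_poly_fun_def)

lemma tpf_ne: "finite P \<Longrightarrow> P \<noteq> {} \<Longrightarrow> trop_poly_fun P x = Max ((\<lambda>t. tterm t x) ` P)"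
  by (simp add: trop_poly_fun_def case_prod_beta)

lemma tpf_real: assumes "finite P" "P \<noteq> {}" shows "\<exists>r. trop_poly_fun P x = ereal r"
proof -
  have "Max ((\<lambda>t. tterm t x) ` P) \<in> (\<lambda>t. tterm t x) ` P" using assms by (intro Max_in) auto
  then obtain t where "t \<in> P" "Max ((\<lambda>t. tterm t x) ` P) = tterm t x" by auto
  then show ?thesis using assms by (auto simp: tpf_ne split: prod.splits)
qed

lemma tp_intro: "finite P \<Longrightarrow> trop_poly_fun P \<in> trop_poly"
  by (auto simp: trop_poly_def)

lemma tpf_not_inf: assumes "finite P" shows "trop_poly_fun P x \<noteq> \<infinity>"
  using tpf_real[OF assms, of x] by (cases "P = {}") auto

lemma tp_not_inf: "p \<in> trop_poly \<Longrightarrow> p x \<noteq> \<infinity>"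
  unfolding trop_poly_def using tpf_not_inf by blast

lemma tp_nz_real: assumes "q \<in> trop_poly" "q \<noteq> (\<lambda>_. -\<infinity>)" shows "\<exists>r. q x = ereal r"
proof -
  obtain P where P: "finite P" "q = trop_poly_fun P" using assms unfolding trop_poly_def by blast
  then have "P \<noteq> {}" using assms by auto
  then show ?thesis using P tpf_real by blast
qed

lemma tp_const: "(\<lambda>_::real^'n::finite. ereal c) \<in> trop_poly"
proof -
  have e: "trop_poly_fun {(c, 0::nat^'n)} = (\<lambda>_::real^'n. ereal c)"
    by (auto simp: trop_poly_fun_def)
  show ?thesis using tp_intro[of "{(c, 0::nat^'n)}"] unfolding e by simp
qed

lemma tp_bot: "(\<lambda>_. -\<infinity>) \<in> trop_poly"
  using tp_intro[of "{}"] by simp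

lemma tp_term: "(\<lambda>x. tterm t x) \<in> trop_poly"
proof -
  have "trop_poly_fun {t} = (\<lambda>x. tterm t x)"
    by (auto simp: trop_poly_fun_def case_prod_beta)
  then show ?thesis using tp_intro[of "{t}"] by simp
qed

lemma tpf_Un: assumes "finite P" "finite Q"
  shows "trop_poly_fun (P \<union> Q) x = max (trop_poly_fun P x) (trop_poly_fun Q x)"
proof (cases "P = {} \<or> Q = {}")
  case True then show ?thesis by auto
next
  case False
  then show ?thesis using assms by (simp add: tpf_ne image_Un Max_Un)
qed

lemma tp_max: assumes "p \<in> trop_poly" "q \<in> trop_poly" shows "(\<lambda>x. max (p x) (q x)) \<in> trop_poly"
proof -
  obtain P Q where "finite P" "p = trop_poly_fun P" "finite Q" "q = trop_poly_fun Q"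
    using assms unfolding trop_poly_def by blast
  then have "(\<lambda>x. max (p x) (q x)) = trop_poly_fun (P \<union> Q)" "finite (P \<union> Q)" by (auto simp: tpf_Un)
  then show ?thesis unfolding trop_poly_def by blast
qed

lemma Max_sum_prod:
  fixes F G :: "_ \<Rightarrow> ereal"
  assumes "finite P" "finite Q" "P \<noteq> {}" "Q \<noteq> {}"
  shows "Max ((\<lambda>(p,q). F p + G q) ` (P \<times> Q)) = Max (F`P) + Max (G`Q)"
proof -
  have "Max (F`P) \<in> F`P" using assms by (intro Max_in) auto
  then obtain p0 where p0: "p0 \<in> P" "F p0 = Max (F`P)" by auto
  have "Max (G`Q) \<in> G`Q" using assms by (intro Max_in) auto
  then obtain q0 where q0: "q0 \<in> Q" "G q0 = Max (G`Q)" by auto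
  show ?thesis
  proof (rule Max_eqI)
    show "finite ((\<lambda>(p,q). F p + G q) ` (P \<times> Q))" using assms by auto
    show "Max (F`P) + Max (G`Q) \<in> (\<lambda>(p,q). F p + G q) ` (P \<times> Q)"
      using p0 q0 by (auto intro!: image_eqI[where x="(p0,q0)"])
    fix y assume "y \<in> (\<lambda>(p,q). F p + G q) ` (P \<times> Q)"
    then obtain p q where "p \<in> P" "q \<in> Q" "y = F p + G q" by auto
    then show "y \<le> Max (F`P) + Max (G`Q)" using assms by (auto intro!: add_mono)
  qed
qed

lemma tp_plus: assumes "p \<in> trop_poly" "q \<in> trop_poly" shows "(\<lambda>x. p x + q x) \<in> trop_poly"
proof -
  obtain P Q where PQ: "finite P" "p = trop_poly_fun P" "finite Q" "q = trop_poly_fun Q"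
    using assms unfolding trop_poly_def by blast
  define R where "R = (\<lambda>((a,k),(b,l)). (a+b, k+l)) ` (P \<times> Q)"
  have fR: "finite R" using PQ by (simp add: R_def)
  have "(\<lambda>x. p x + q x) = trop_poly_fun R"
  proof
    fix x :: "real^'a"
    show "p x + q x = trop_poly_fun R x"
    proof (cases "P = {} \<or> Q = {}")
      case True
      then show ?thesis using PQ tpf_not_inf[of P x] tpf_not_inf[of Q x] by (auto simp: R_def)
    next
      case False
      have img: "(\<lambda>t. tterm t x) ` R = (\<lambda>(s,t). tterm s x + tterm t x) ` (P \<times> Q)"
        unfolding R_def image_image
        by (rule image_cong) (auto simp: sum.distrib distrib_right algebra_simps)
      have Rne: "R \<noteq> {}" using False by (auto simp: R_def)
      have "trop_poly_fun R x = Max ((\<lambda>(s,t). tterm s x + tterm t x) ` (P \<times> Q))"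
        using tpf_ne[OF fR Rne] img by simp
      also have "\<dots> = Max ((\<lambda>t. tterm t x) ` P) + Max ((\<lambda>t. tterm t x) ` Q)"
        using Max_sum_prod[of P Q "\<lambda>t. tterm t x" "\<lambda>t. tterm t x"] False PQ by simp
      also have "\<dots> = p x + q x" using False PQ by (simp add: tpf_ne)
      finally show ?thesis by simp
    qed
  qed
  then show ?thesis using fR unfolding trop_poly_def by blast
qed

lemma tr_intro: "p \<in> trop_poly \<Longrightarrow> q \<in> trop_poly \<Longrightarrow> q \<noteq> (\<lambda>_. -\<infinity>) \<Longrightarrow> (\<lambda>x. p x - q x) \<in> trop_rat"
  unfolding trop_rat_def by blast

lemma tr_elim: assumes "r \<in> trop_rat"
  obtains p q where "p \<in> trop_poly" "q \<in> trop_poly" "q \<noteq> (\<lambda>_. -\<infinity>)" "r = (\<lambda>x. p x - q x)"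
  using assms unfolding trop_rat_def by blast

lemma tr_not_inf: "r \<in> trop_rat \<Longrightarrow> r x \<noteq> \<infinity>"
  by (erule tr_elim) (metis tp_not_inf tp_nz_real ereal_minus(2) ereal_minus(5) ereal_minus_eq_PInfty_iff)

lemma tr_restr: "r \<in> trop_rat \<Longrightarrow> restr A r \<in> rat_quot A"
  unfolding rat_quot_def by blast

definition QA :: "(real^'m::finite) set \<Rightarrow> (real^'m \<Rightarrow> ereal) \<Rightarrow> bool" where
  "QA A h \<longleftrightarrow> (\<exists>r\<in>trop_rat. \<forall>y\<in>A. h y = r y)"

lemma QA_restr: assumes "QA A h" shows "restr A h \<in> rat_quot A"
proof -
  obtain r where r: "r \<in> trop_rat" "\<forall>y\<in>A. h y = r y" using assms unfolding QA_def by blast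
  then have "restr A h = restr A r" by (auto simp: restr_def)
  then show ?thesis using tr_restr[OF r(1)] by simp
qed

lemma QA_of_quot: assumes "h \<in> rat_quot A" shows "QA A h"
  using assms unfolding rat_quot_def QA_def restr_def by auto

lemma QA_cong: "QA A h \<Longrightarrow> (\<And>y. y \<in> A \<Longrightarrow> h y = h' y) \<Longrightarrow> QA A h'"
  unfolding QA_def by metis

lemma nz_const: "(\<lambda>_. ereal c) \<noteq> (\<lambda>_. -\<infinity>)"
  by (metis MInfty_neq_ereal(2))

lemma QA_const: "QA A (\<lambda>_. ereal c)"
proof -
  have "(\<lambda>x. ereal c - ereal 0) \<in> trop_rat" by (rule tr_intro[OF tp_const tp_const nz_const])
  then show ?thesis unfolding QA_def by (intro bexI[of _ "\<lambda>x. ereal c - ereal 0"]) auto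
qed

lemma QA_bot: "QA A (\<lambda>_. -\<infinity>)"
proof -
  have "(\<lambda>x. -\<infinity> - ereal 0) \<in> trop_rat" by (rule tr_intro[OF tp_bot tp_const nz_const])
  then show ?thesis unfolding QA_def by (intro bexI[of _ "\<lambda>x. -\<infinity> - ereal 0"]) auto
qed

lemma id_max: "max (p1 - ereal a) (p2 - ereal b) = max (p1 + ereal b) (p2 + ereal a) - (ereal a + ereal b)"
  by (cases p1; cases p2) (auto simp: max_def)

lemma id_plus: "p1 \<noteq> \<infinity> \<Longrightarrow> p2 \<noteq> \<infinity> \<Longrightarrow> (p1 - ereal a) + (p2 - ereal b) = (p1 + p2) - (ereal a + ereal b)"
  by (cases p1; cases p2) auto

lemma id_diff: "(p1 - ereal a) - (ereal c - ereal b) = (p1 + ereal b) - (ereal a + ereal c)"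
  by (cases p1) auto

lemma nz_plus: assumes "q1 \<in> trop_poly" "q1 \<noteq> (\<lambda>_. -\<infinity>)" "q2 \<in> trop_poly" "q2 \<noteq> (\<lambda>_. -\<infinity>)"
  shows "(\<lambda>x. q1 x + q2 x) \<noteq> (\<lambda>_. -\<infinity>)"
proof
  assume "(\<lambda>x. q1 x + q2 x) = (\<lambda>_. -\<infinity>)"
  then have "q1 0 + q2 0 = -\<infinity>" by metis
  moreover obtain a b where "q1 0 = ereal a" "q2 0 = ereal b" using tp_nz_real assms by metis
  ultimately show False by simp
qed

lemma QA_max: assumes "QA A h1" "QA A h2" shows "QA A (\<lambda>y. max (h1 y) (h2 y))"
proof -
  obtain r1 where r1: "r1 \<in> trop_rat" "\<forall>y\<in>A. h1 y = r1 y" using assms unfolding QA_def by blast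
  obtain r2 where r2: "r2 \<in> trop_rat" "\<forall>y\<in>A. h2 y = r2 y" using assms unfolding QA_def by blast
  obtain p1 q1 where a1: "p1 \<in> trop_poly" "q1 \<in> trop_poly" "q1 \<noteq> (\<lambda>_. -\<infinity>)" "r1 = (\<lambda>x. p1 x - q1 x)"
    using r1(1) by (rule tr_elim)
  obtain p2 q2 where a2: "p2 \<in> trop_poly" "q2 \<in> trop_poly" "q2 \<noteq> (\<lambda>_. -\<infinity>)" "r2 = (\<lambda>x. p2 x - q2 x)"
    using r2(1) by (rule tr_elim)
  let ?r = "\<lambda>x. max (p1 x + q2 x) (p2 x + q1 x) - (q1 x + q2 x)"
  have "?r \<in> trop_rat"
    by (intro tr_intro tp_max tp_plus nz_plus a1 a2)
  moreover have "\<forall>y\<in>A. max (h1 y) (h2 y) = ?r y"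
  proof
    fix y assume "y \<in> A"
    obtain a b where "q1 y = ereal a" "q2 y = ereal b" using tp_nz_real a1 a2 by metis
    then show "max (h1 y) (h2 y) = ?r y" using r1 r2 a1 a2 \<open>y \<in> A\<close> id_max by simp
  qed
  ultimately show ?thesis unfolding QA_def by (intro bexI[of _ ?r]) auto
qed

lemma QA_plus: assumes "QA A h1" "QA A h2" shows "QA A (\<lambda>y. h1 y + h2 y)"
proof -
  obtain r1 where r1: "r1 \<in> trop_rat" "\<forall>y\<in>A. h1 y = r1 y" using assms unfolding QA_def by blast
  obtain r2 where r2: "r2 \<in> trop_rat" "\<forall>y\<in>A. h2 y = r2 y" using assms unfolding QA_def by blast
  obtain p1 q1 where a1: "p1 \<in> trop_poly" "q1 \<in> trop_poly" "q1 \<noteq> (\<lambda>_. -\<infinity>)" "r1 = (\<lambda>x. p1 x - q1 x)"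
    using r1(1) by (rule tr_elim)
  obtain p2 q2 where a2: "p2 \<in> trop_poly" "q2 \<in> trop_poly" "q2 \<noteq> (\<lambda>_. -\<infinity>)" "r2 = (\<lambda>x. p2 x - q2 x)"
    using r2(1) by (rule tr_elim)
  let ?r = "\<lambda>x. (p1 x + p2 x) - (q1 x + q2 x)"
  have "?r \<in> trop_rat"
    by (intro tr_intro tp_max tp_plus nz_plus a1 a2)
  moreover have "\<forall>y\<in>A. h1 y + h2 y = ?r y"
  proof
    fix y assume "y \<in> A"
    obtain a b where "q1 y = ereal a" "q2 y = ereal b" using tp_nz_real a1 a2 by metis
    note ab = this
    have "h1 y + h2 y = (p1 y - ereal a) + (p2 y - ereal b)" using r1 r2 a1 a2 ab \<open>y \<in> A\<close> by simp
    also have "\<dots> = (p1 y + p2 y) - (ereal a + ereal b)" by (rule id_plus) (use a1 a2 tp_not_inf in auto)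
    finally show "h1 y + h2 y = ?r y" using ab by simp
  qed
  ultimately show ?thesis unfolding QA_def by (intro bexI[of _ ?r]) auto
qed

lemma QA_diff: assumes "QA A h1" "QA A (\<lambda>y. ereal (u y))" "A \<noteq> {}"
  shows "QA A (\<lambda>y. h1 y - ereal (u y))"
proof -
  obtain r1 where r1: "r1 \<in> trop_rat" "\<forall>y\<in>A. h1 y = r1 y" using assms unfolding QA_def by blast
  obtain r2 where r2: "r2 \<in> trop_rat" "\<forall>y\<in>A. ereal (u y) = r2 y" using assms unfolding QA_def by blast
  obtain p1 q1 where a1: "p1 \<in> trop_poly" "q1 \<in> trop_poly" "q1 \<noteq> (\<lambda>_. -\<infinity>)" "r1 = (\<lambda>x. p1 x - q1 x)"
    using r1(1) by (rule tr_elim)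
  obtain p2 q2 where a2: "p2 \<in> trop_poly" "q2 \<in> trop_poly" "q2 \<noteq> (\<lambda>_. -\<infinity>)" "r2 = (\<lambda>x. p2 x - q2 x)"
    using r2(1) by (rule tr_elim)
  have p2r: "\<exists>c. p2 y = ereal c" if "y \<in> A" for y
  proof -
    obtain b where b: "q2 y = ereal b" using tp_nz_real a2 by metis
    have "ereal (u y) = p2 y - ereal b" using r2 a2 b that by simp
    then show ?thesis by (cases "p2 y") auto
  qed
  have p2nz: "p2 \<noteq> (\<lambda>_. -\<infinity>)"
  proof
    assume "p2 = (\<lambda>_. -\<infinity>)"
    moreover obtain y where "y \<in> A" using assms by blast
    ultimately show False using p2r by fastforce
  qed
  let ?r = "\<lambda>x. (p1 x + q2 x) - (q1 x + p2 x)"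
  have "?r \<in> trop_rat"
    by (intro tr_intro tp_max tp_plus nz_plus a1 a2 p2nz)
  moreover have "\<forall>y\<in>A. h1 y - ereal (u y) = ?r y"
  proof
    fix y assume "y \<in> A"
    obtain a b where ab: "q1 y = ereal a" "q2 y = ereal b" using tp_nz_real a1 a2 by metis
    obtain c where c: "p2 y = ereal c" using p2r \<open>y \<in> A\<close> by blast
    have "h1 y - ereal (u y) = (p1 y - ereal a) - (ereal c - ereal b)"
      using r1 r2 a1 a2 ab c \<open>y \<in> A\<close> by simp
    also have "\<dots> = ?r y" using ab c id_diff by simp
    finally show "h1 y - ereal (u y) = ?r y" .
  qed
  ultimately show ?thesis unfolding QA_def by (intro bexI[of _ ?r]) auto
qed

lemma QR_add: "QA A (\<lambda>y. ereal (u y)) \<Longrightarrow> QA A (\<lambda>y. ereal (v y)) \<Longrightarrow> QA A (\<lambda>y. ereal (u y + v y))"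
  using QA_plus[of A "\<lambda>y. ereal (u y)" "\<lambda>y. ereal (v y)"] by simp

lemma QR_nat_mult: "QA A (\<lambda>y. ereal (u y)) \<Longrightarrow> QA A (\<lambda>y. ereal (real k * u y))"
proof (induction k)
  case 0 then show ?case using QA_const[of A 0] by simp
next
  case (Suc k)
  then have "QA A (\<lambda>y. ereal (u y + real k * u y))" by (intro QR_add)
  then show ?case by (simp add: algebra_simps)
qed

lemma QR_sum: "finite S \<Longrightarrow> (\<And>i. QA A (\<lambda>y. ereal (g i y))) \<Longrightarrow> QA A (\<lambda>y. ereal (\<Sum>i\<in>S. g i y))"
proof (induction S rule: finite_induct)
  case empty then show ?case using QA_const[of A 0] by simp
next
  case (insert x F)
  then show ?case by (simp add: QR_add)
qed

lemma tpf_insert: "finite S \<Longrightarrow> trop_poly_fun (insert t S) x = max (tterm t x) (trop_poly_fun S x)"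
proof -
  assume "finite S"
  have "trop_poly_fun (insert t S) x = trop_poly_fun ({t} \<union> S) x" by simp
  also have "\<dots> = max (trop_poly_fun {t} x) (trop_poly_fun S x)" using \<open>finite S\<close> by (intro tpf_Un) auto
  finally show ?thesis by (simp add: trop_poly_fun_def case_prod_beta)
qed

lemma comp:
  fixes A :: "(real^'m::finite) set" and f :: "'n::finite \<Rightarrow> real^'m \<Rightarrow> ereal"
    and r :: "real^'n \<Rightarrow> ereal"
  assumes ne: "A \<noteq> {}" and fq: "\<forall>i. QA A (f i)" and fr: "\<forall>y\<in>A. \<forall>i. f i y \<noteq> -\<infinity> \<and> f i y \<noteq> \<infinity>"
    and r: "r \<in> trop_rat"
  shows "QA A (\<lambda>y. r (\<chi> i. real_of_ereal (f i y)))"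
proof -
  define \<theta> where "\<theta> = (\<lambda>y. (\<chi> i. real_of_ereal (f i y)) :: real^'n)"
  have coord: "QA A (\<lambda>y. ereal (\<theta> y $ i))" for i
  proof (rule QA_cong[OF fq[rule_format, of i]])
    fix y assume "y \<in> A"
    then show "f i y = ereal (\<theta> y $ i)" using fr by (cases "f i y") (auto simp: \<theta>_def)
  qed
  have mono: "QA A (\<lambda>y. tterm t (\<theta> y))" for t :: "real \<times> (nat^'n)"
  proof (cases t)
    case (Pair a k)
    have "QA A (\<lambda>y. ereal (a + (\<Sum>i\<in>UNIV. real (k$i) * \<theta> y $ i)))"
      by (intro QR_add QA_const QR_sum QR_nat_mult coord) simp
    then show ?thesis by (simp add: Pair)
  qed
  have poly: "QA A (\<lambda>y. trop_poly_fun P (\<theta> y))" if "finite P" for P :: "(real \<times> (nat^'n)) set"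
    using that
  proof (induction P rule: finite_induct)
    case empty then show ?case using QA_bot by simp
  next
    case (insert t F)
    then show ?case by (simp add: tpf_insert QA_max mono)
  qed
  obtain p q where pq: "p \<in> trop_poly" "q \<in> trop_poly" "q \<noteq> (\<lambda>_. -\<infinity>)" "r = (\<lambda>x. p x - q x)"
    using r by (rule tr_elim)
  have Qp: "QA A (\<lambda>y. p (\<theta> y))" using pq(1) poly unfolding trop_poly_def by blast
  have qre: "q x = ereal (real_of_ereal (q x))" for x
    using tp_nz_real[OF pq(2,3), of x] by auto
  have "QA A (\<lambda>y. q (\<theta> y))" using pq(2) poly unfolding trop_poly_def by blast
  then have Qq: "QA A (\<lambda>y. ereal (real_of_ereal (q (\<theta> y))))" by (rule QA_cong) (rule qre)
  have "QA A (\<lambda>y. p (\<theta> y) - ereal (real_of_ereal (q (\<theta> y))))" by (rule QA_diff[OF Qp Qq ne])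
  then have "QA A (\<lambda>y. r (\<theta> y))"
    by (rule QA_cong) (simp only: pq(4) qre[of "\<theta> _", symmetric])
  then show ?thesis unfolding \<theta>_def .
qed

lemma quot_not_inf: "h \<in> rat_quot A \<Longrightarrow> h y \<noteq> \<infinity>"
proof -
  assume "h \<in> rat_quot A"
  then obtain r where "r \<in> trop_rat" "h = restr A r" unfolding rat_quot_def by blast
  then show ?thesis using tr_not_inf[of r y] by (simp add: restr_def)
qed

lemma quot_out: "h \<in> rat_quot A \<Longrightarrow> y \<notin> A \<Longrightarrow> h y = -\<infinity>"
  unfolding rat_quot_def restr_def by auto

theorem proposition3p21:
  fixes V :: "(real^'n::finite) set" and W :: "(real^'m::finite) set"
    and f :: "'n \<Rightarrow> real^'m \<Rightarrow> ereal"
  defines "\<theta> \<equiv> \<lambda>y. (\<chi> i. real_of_ereal (f i y)) :: real^'n"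
  defines "\<theta>s \<equiv> \<lambda>h. restr W (\<lambda>y. h (\<theta> y))"
  assumes W_ne: "W \<noteq> {}"
    and f_in: "\<forall>i. f i \<in> rat_quot W"
    and f_real: "\<forall>y\<in>W. \<forall>i. f i y \<noteq> -\<infinity>"
    and im: "\<theta> ` W \<subseteq> V"
  shows "V \<noteq> {} \<and>
    (\<theta>s ` rat_quot V \<subseteq> rat_quot W \<and> rat_quot W \<subseteq> FWT W) \<and>
    trop_alg_hom V (rat_quot V) W \<theta>s \<and>
    (V \<subseteq> \<theta> ` W \<longrightarrow> inj_on \<theta>s (rat_quot V)) \<and>
    ((\<exists>\<psi>. homeomorphism W V \<theta> \<psi> \<and>
            (\<exists>g :: 'm \<Rightarrow> real^'n \<Rightarrow> ereal. (\<forall>j. g j \<in> rat_quot V) \<and>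
               (\<forall>x\<in>V. \<forall>j. g j x = ereal (\<psi> x $ j))))
         \<longrightarrow> trop_alg_hom V (rat_quot V) W \<theta>s \<and> bij_betw \<theta>s (rat_quot V) (rat_quot W))"
proof -
  have thV: "\<theta> y \<in> V" if "y \<in> W" for y using im that by blast
  have Vne: "V \<noteq> {}" using W_ne im by blast
  have fQ: "\<forall>i. QA W (f i)" using f_in QA_of_quot by blast
  have fr: "\<forall>y\<in>W. \<forall>i. f i y \<noteq> -\<infinity> \<and> f i y \<noteq> \<infinity>" using f_real f_in quot_not_inf by blast
  have img: "\<theta>s h \<in> rat_quot W" if hV: "h \<in> rat_quot V" for h
  proof -
    obtain r where r: "r \<in> trop_rat" "h = restr V r" using hV unfolding rat_quot_def by blast
    have "\<theta>s h = restr W (\<lambda>y. r (\<theta> y))"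
      using thV by (auto simp: \<theta>s_def r(2) restr_def fun_eq_iff)
    moreover have "QA W (\<lambda>y. r (\<theta> y))" unfolding \<theta>_def by (rule comp[OF W_ne fQ fr r(1)])
    ultimately show ?thesis using QA_restr by simp
  qed
  have fwt: "rat_quot W \<subseteq> FWT W"
    unfolding FWT_def using quot_not_inf quot_out by blast
  have hom: "trop_alg_hom V (rat_quot V) W \<theta>s"
    unfolding trop_alg_hom_def \<theta>s_def using thV by (auto simp: restr_def fun_eq_iff)
  have inj: "inj_on \<theta>s (rat_quot V)" if sub: "V \<subseteq> \<theta> ` W"
  proof (rule inj_onI)
    fix a b assume a: "a \<in> rat_quot V" and b: "b \<in> rat_quot V" and eq: "\<theta>s a = \<theta>s b"
    show "a = b"
    proof
      fix x show "a x = b x"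
      proof (cases "x \<in> V")
        case True
        then obtain y where y: "y \<in> W" "x = \<theta> y" using sub by blast
        have "\<theta>s a y = \<theta>s b y" using eq by simp
        then show ?thesis using y by (simp add: \<theta>s_def restr_def)
      next
        case False then show ?thesis using a b quot_out by metis
      qed
    qed
  qed
  have part5: "bij_betw \<theta>s (rat_quot V) (rat_quot W)"
    if prem: "\<exists>\<psi>. homeomorphism W V \<theta> \<psi> \<and>
            (\<exists>g :: 'm \<Rightarrow> real^'n \<Rightarrow> ereal. (\<forall>j. g j \<in> rat_quot V) \<and>
               (\<forall>x\<in>V. \<forall>j. g j x = ereal (\<psi> x $ j)))"
  proof -
    obtain \<psi> g where hm: "homeomorphism W V \<theta> \<psi>" and gq: "\<forall>j. g j \<in> rat_quot V"
      and gv: "\<forall>x\<in>V. \<forall>j. g j x = ereal (\<psi> x $ j)" (is "?gv")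
      using prem by blast
    have h1: "\<forall>x\<in>W. \<psi> (\<theta> x) = x" "\<theta> ` W = V" "\<forall>y\<in>V. \<theta> (\<psi> y) = y" "\<psi> ` V = W"
      using hm unfolding homeomorphism_def by auto
    have injV: "inj_on \<theta>s (rat_quot V)" using inj h1(2) by blast
    have "rat_quot W \<subseteq> \<theta>s ` rat_quot V"
    proof
      fix h assume "h \<in> rat_quot W"
      then obtain r where r: "r \<in> trop_rat" "h = restr W r" unfolding rat_quot_def by blast
      define k where "k = restr V (\<lambda>x. r (\<chi> j. real_of_ereal (g j x)))"
      have gQ: "\<forall>j. QA V (g j)" using gq QA_of_quot by blast
      have gr: "\<forall>x\<in>V. \<forall>j. g j x \<noteq> -\<infinity> \<and> g j x \<noteq> \<infinity>" using gv by simp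
      have kin: "k \<in> rat_quot V" unfolding k_def by (rule QA_restr[OF comp[OF Vne gQ gr r(1)]])
      have "\<theta>s k = h"
      proof
        fix y show "\<theta>s k y = h y"
        proof (cases "y \<in> W")
          case True
          then have tv: "\<theta> y \<in> V" by (rule thV)
          have "(\<chi> j. real_of_ereal (g j (\<theta> y))) = \<psi> (\<theta> y)"
            using gv tv by (simp add: vec_eq_iff)
          then show ?thesis using True tv h1(1) by (simp add: \<theta>s_def k_def r(2) restr_def)
        next
          case False then show ?thesis by (simp add: \<theta>s_def r(2) restr_def)
        qed
      qed
      then show "h \<in> \<theta>s ` rat_quot V" using kin by blast
    qed
    then show ?thesis using injV img unfolding bij_betw_def by blast
  qed
  show ?thesis using Vne img fwt hom inj part5 by blast
qed

end
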